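(* Let $x,y$ be nonzero complex numbers, $N\ge1$ and $0\le j,k\le N$; put $m=\min(j,k)$, $M=\max(j,k)$ and $c=\frac{1+xy}{2\sqrt{xy}}$. Then the skew Schur polynomial indexed by the shape $(N,j)/(k)$ and evaluated at the two variables $x,y^{-1}$ satisfies $$s_{(N,j)/(k)}(x,y^{-1})=(xy^{-1})^{(N+j-k)/2}\,U_{m}(c)\,U_{N-M}(c)=\frac{1}{x^{k}y^{N+j}}\sum_{r=0}^{m}(xy)^r\sum_{r=M}^{N}(xy)^r,$$ where $U_n$ are the Chebyshev polynomials of the second kind.
   Context: Chebyshev polynomials of the second kind: $U_0(z)=1$, $U_1(z)=2z$, $U_{n+1}(z)=2zU_n(z)-U_{n-1}(z)$. $s_{(N,j)/(k)}$ denotes the skew Schur polynomial of the skew shape obtained from the partition $(N,j)$ by removing the partition $(k)$ (it is $0$ unless $(k)\subseteq(N,j)$). The same branch of $\sqrt{xy}$ is used throughout. *)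

theory Defs
  imports Complex_Main
begin

fun chebU :: "nat \<Rightarrow> complex \<Rightarrow> complex" where
  "chebU 0 z = 1"
| "chebU (Suc 0) z = 2 * z"
| "chebU (Suc (Suc n)) z = 2 * z * chebU (Suc n) z - chebU n z"

text \<open>Young diagram of a partition given as a list of row lengths (0-indexed cells (row, column)).\<close>
definition diagram :: "nat list \<Rightarrow> (nat \<times> nat) set" where
  "diagram lam = {(i, c). i < length lam \<and> c < lam ! i}"

definition skew_diagram :: "nat list \<Rightarrow> nat list \<Rightarrow> (nat \<times> nat) set" where
  "skew_diagram lam mu = diagram lam - diagram mu"

definition ssyt :: "nat \<Rightarrow> (nat \<times> nat) set \<Rightarrow> ((nat \<times> nat) \<Rightarrow> nat) set" where
  "ssyt n D = {T. (\<forall>p. p \<notin> D \<longrightarrow> T p = 0) \<and> (\<forall>p\<in>D. 1 \<le> T p \<and> T p \<le> n)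
      \<and> (\<forall>i c c'. (i, c) \<in> D \<and> (i, c') \<in> D \<and> c < c' \<longrightarrow> T (i, c) \<le> T (i, c'))
      \<and> (\<forall>i i' c. (i, c) \<in> D \<and> (i', c) \<in> D \<and> i < i' \<longrightarrow> T (i, c) < T (i', c))}"

definition is_partition :: "nat list \<Rightarrow> bool" where
  "is_partition lam = sorted (rev lam)"

definition skew_schur :: "nat \<Rightarrow> (nat \<Rightarrow> 'a::comm_ring_1) \<Rightarrow> nat list \<Rightarrow> nat list \<Rightarrow> 'a" where
  "skew_schur n x lam mu =
     (if diagram mu \<subseteq> diagram lam then
        (\<Sum>T\<in>ssyt n (skew_diagram lam mu). \<Prod>p\<in>skew_diagram lam mu. x (T p))
      else 0)"

end

theory Submission
  imports Defs
begin


lemma chebU_sum0: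
  fixes s :: complex assumes "s \<noteq> 0"
  shows "z = (1 + s^2) / (2*s) \<Longrightarrow> chebU n z * s^n = (\<Sum>i=0..n. (s^2)^i)"
proof (induction n z rule: chebU.induct)
  case (1 z) then show ?case by simp
next
  case (2 z) then show ?case using assms by (simp add: field_simps power2_eq_square)
next
  case (3 n z)
  have "chebU (Suc (Suc n)) z * s^(Suc (Suc n))
     = (1 + s^2) * (chebU (Suc n) z * s^(Suc n)) - s^2 * (chebU n z * s^n)"
  proof -
    have zz: "2*s*z = 1 + s^2" using assms 3(3) by (simp add: field_simps)
    have "chebU (Suc (Suc n)) z * s^(Suc (Suc n))
       = (2*s*z) * (chebU (Suc n) z * s^(Suc n)) - s^2 * (chebU n z * s^n)"
      by (simp add: algebra_simps power2_eq_square)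
    then show ?thesis using zz by simp
  qed
  also have "\<dots> = (1 + s^2) * (\<Sum>i=0..Suc n. (s^2)^i) - s^2 * (\<Sum>i=0..n. (s^2)^i)"
    using 3 by simp
  also have "\<dots> = (\<Sum>i=0..Suc (Suc n). (s^2)^i)"
    by (simp add: algebra_simps sum_distrib_left sum.distrib power_Suc[symmetric] del: power_Suc)
  finally show ?case .
qed



lemma alg_part:
  fixes x y s :: complex and N j k :: nat
  assumes "x \<noteq> 0" "y \<noteq> 0" "j \<le> N" "k \<le> N"
    and "s ^ 2 = x * y"
  defines "m \<equiv> min j k" and "M \<equiv> max j k" and "c \<equiv> (1 + x * y) / (2 * s)"
  shows "(s / y) ^ (N + j - k) * chebU m c * chebU (N - M) c
           = 1 / (x ^ k * y ^ (N + j)) * (\<Sum>r=0..m. (x * y) ^ r) * (\<Sum>r=M..N. (x * y) ^ r)"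
proof -
  have s0: "s \<noteq> 0" using assms(1,2,5) by auto
  have cc: "c = (1 + s^2) / (2*s)" using assms(5) c_def by simp
  have U1: "chebU m c = (\<Sum>r=0..m. (x * y) ^ r) / s^m"
    using chebU_sum0[OF s0 cc, of m] s0 assms(5) by (simp add: field_simps)
  have U2: "chebU (N-M) c = (\<Sum>r=0..N-M. (x * y) ^ r) / s^(N-M)"
    using chebU_sum0[OF s0 cc, of "N-M"] s0 assms(5) by (simp add: field_simps)
  have MN: "M \<le> N" using assms M_def by simp
  have sh: "(\<Sum>r=M..N. (x * y) ^ r) = (x*y)^M * (\<Sum>r=0..N-M. (x * y) ^ r)"
  proof -
    have "(\<Sum>r=M..N. (x * y) ^ r) = (\<Sum>r=0..N-M. (x * y) ^ (r + M))"
      using sum.shift_bounds_cl_nat_ivl[of "\<lambda>r. (x*y)^r" 0 M "N-M"] MN by simp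
    then show ?thesis by (simp add: power_add sum_distrib_left mult.commute)
  qed
  define e where "e = N + j - k"
  have Nj: "N + j = e + k" using assms(4) e_def by simp
  have mM: "m + M = j + k" using m_def M_def by simp
  have key: "s^e * (x^k * y^(N+j)) = s^m * s^(N-M) * (x*y)^M * y^e"
  proof -
    have "s^e * (x^k * y^(N+j)) = s^e * (x*y)^k * y^e" by (simp add: Nj power_add power_mult_distrib)
    also have "\<dots> = s^(e + 2*k) * y^e" by (simp add: assms(5)[symmetric] power_mult power_add)
    also have "e + 2*k = m + (N-M) + 2*M" using mM MN Nj by linarith
    also have "s^(m + (N-M) + 2*M) * y^e = s^m * s^(N-M) * (x*y)^M * y^e"
      by (simp add: assms(5)[symmetric] power_mult power_add)
    finally show ?thesis .
  qed
  show ?thesis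
    unfolding U1 U2 sh e_def[symmetric] using key s0 assms(1,2)
    by (simp add: field_simps power_divide)
qed



definition tab :: "nat \<Rightarrow> nat \<Rightarrow> nat \<Rightarrow> nat \<Rightarrow> nat \<Rightarrow> nat \<times> nat \<Rightarrow> nat" where
  "tab k N j a b p = (if fst p = 0 \<and> k \<le> snd p \<and> snd p < N then (if snd p < b then 1 else 2)
     else if fst p = 1 \<and> snd p < j then (if snd p < a then 1 else 2) else 0)"

lemma skew_D:
  assumes "j \<le> N" "k \<le> N"
  shows "skew_diagram [N, j] [k] = ({0} \<times> {k..<N}) \<union> ({1} \<times> {..<j})"
  using assms unfolding skew_diagram_def diagram_def
  by (auto simp: less_Suc_eq nth_Cons split: nat.splits)

lemma diag_sub:
  assumes "k \<le> N" shows "diagram [k] \<subseteq> diagram [N, j]"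
  using assms unfolding diagram_def by auto

lemma ssyt_char:
  assumes "j \<le> N" "k \<le> N"
  shows "ssyt 2 (({0} \<times> {k..<N}) \<union> ({1} \<times> {..<j}))
     = (\<lambda>(a,b). tab k N j a b) ` ({0..min j k} \<times> {max j k..N})"
    (is "ssyt 2 ?D = ?R")
proof
  show "?R \<subseteq> ssyt 2 ?D"
    using assms unfolding ssyt_def tab_def by (auto split: if_splits)
next
  show "ssyt 2 ?D \<subseteq> ?R"
  proof
    fix T assume T: "T \<in> ssyt 2 ?D"
    have out: "\<And>p. p \<notin> ?D \<Longrightarrow> T p = 0" and rng: "\<And>p. p \<in> ?D \<Longrightarrow> 1 \<le> T p \<and> T p \<le> 2"
      and row: "\<And>i c c'. (i, c) \<in> ?D \<Longrightarrow> (i, c') \<in> ?D \<Longrightarrow> c < c' \<Longrightarrow> T (i, c) \<le> T (i, c')"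
      and col: "\<And>i i' c. (i, c) \<in> ?D \<Longrightarrow> (i', c) \<in> ?D \<Longrightarrow> i < i' \<Longrightarrow> T (i, c) < T (i', c)"
      using T unfolding ssyt_def by blast+
    define a where "a = (LEAST c. c = j \<or> T (1, c) = 2)"
    define b where "b = (LEAST c. c = N \<or> (k \<le> c \<and> T (0, c) = 2))"
    have a_le: "a \<le> j" unfolding a_def by (rule Least_le) simp
    have b_le: "b \<le> N" unfolding b_def by (rule Least_le) simp
    have b_ge: "k \<le> b"
    proof -
      have "b = N \<or> (k \<le> b \<and> T (0, b) = 2)" unfolding b_def by (rule LeastI[of _ N]) simp
      then show ?thesis using assms by auto
    qed
    have a1: "T (1, c) = 1" if "c < a" for c
    proof -
      have "\<not> (c = j \<or> T (1, c) = 2)" using not_less_Least[OF that[unfolded a_def]] .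
      then have "c < j" "T (1,c) \<noteq> 2" using that a_le by auto
      then show ?thesis using rng[of "(1,c)"] by auto
    qed
    have a2: "T (1, c) = 2" if "a \<le> c" "c < j" for c
    proof -
      have "a = j \<or> T (1, a) = 2" unfolding a_def by (rule LeastI[of _ j]) simp
      then have Ta: "T (1, a) = 2" using that by auto
      show ?thesis
      proof (cases "a = c")
        case True then show ?thesis using Ta by simp
      next
        case False
        then have "T (1, a) \<le> T (1, c)" using row[of 1 a c] that by auto
        then show ?thesis using Ta rng[of "(1,c)"] that by auto
      qed
    qed
    have b1: "T (0, c) = 1" if "k \<le> c" "c < b" for c
    proof -
      have "\<not> (c = N \<or> (k \<le> c \<and> T (0, c) = 2))" using not_less_Least[OF that(2)[unfolded b_def]] .
      then have "c < N" "T (0,c) \<noteq> 2" using that b_le by auto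
      then show ?thesis using rng[of "(0,c)"] that by auto
    qed
    have b2: "T (0, c) = 2" if "b \<le> c" "c < N" for c
    proof -
      have "b = N \<or> (k \<le> b \<and> T (0, b) = 2)" unfolding b_def by (rule LeastI[of _ N]) simp
      then have Tb: "T (0, b) = 2" using that by auto
      show ?thesis
      proof (cases "b = c")
        case True then show ?thesis using Tb by simp
      next
        case False
        then have "T (0, b) \<le> T (0, c)" using row[of 0 b c] that b_ge by auto
        then show ?thesis using Tb rng[of "(0,c)"] that b_ge by auto
      qed
    qed
    have a_k: "a \<le> k"
    proof (rule ccontr)
      assume "\<not> a \<le> k"
      then have "k < a" by simp
      then have "T (1, k) = 1" using a1 by simp
      moreover have "T (0, k) < T (1, k)" using col[of 0 k 1] \<open>k < a\<close> a_le assms by auto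
      moreover have "1 \<le> T (0, k)" using rng[of "(0,k)"] \<open>k < a\<close> a_le assms by auto
      ultimately show False by simp
    qed
    have b_j: "j \<le> b"
    proof (rule ccontr)
      assume "\<not> j \<le> b"
      then have "b < j" by simp
      then have "T (0, b) = 2" using b2 assms by simp
      moreover have "T (0, b) < T (1, b)" using col[of 0 b 1] \<open>b < j\<close> b_ge assms by auto
      moreover have "T (1, b) \<le> 2" using rng[of "(1,b)"] \<open>b < j\<close> by auto
      ultimately show False by simp
    qed
    have "T = tab k N j a b"
    proof
      fix p :: "nat \<times> nat"
      obtain i c where p: "p = (i, c)" by fastforce
      show "T p = tab k N j a b p"
      proof (cases "p \<in> ?D")
        case False then show ?thesis using out[OF False] unfolding tab_def p by auto
      next
        case True
        then have "(i = 0 \<and> k \<le> c \<and> c < N) \<or> (i = 1 \<and> c < j)" using p by auto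
        then show ?thesis unfolding tab_def p using a1 a2 b1 b2 by auto
      qed
    qed
    moreover have "(a, b) \<in> {0..min j k} \<times> {max j k..N}" using a_le a_k b_le b_ge b_j by auto
    ultimately show "T \<in> ?R" by force
  qed
qed



lemma tab_inj:
  assumes "j \<le> N" "k \<le> N"
  shows "inj_on (\<lambda>(a,b). tab k N j a b) ({0..min j k} \<times> {max j k..N})"
proof (rule inj_onI, clarify)
  fix a b a' b'
  assume h: "a \<in> {0..min j k}" "b \<in> {max j k..N}" "a' \<in> {0..min j k}" "b' \<in> {max j k..N}"
    and e: "tab k N j a b = tab k N j a' b'"
  have "a = a'"
  proof (rule ccontr)
    assume "a \<noteq> a'"
    then consider "a < a'" | "a' < a" by linarith
    then show False
    proof cases
      case 1 then have "tab k N j a b (1, a) \<noteq> tab k N j a' b' (1, a)" using h unfolding tab_def by auto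
      then show False using e by simp
    next
      case 2 then have "tab k N j a b (1, a') \<noteq> tab k N j a' b' (1, a')" using h unfolding tab_def by auto
      then show False using e by simp
    qed
  qed
  moreover have "b = b'"
  proof (rule ccontr)
    assume "b \<noteq> b'"
    then consider "b < b'" | "b' < b" by linarith
    then show False
    proof cases
      case 1 then have "tab k N j a b (0, b) \<noteq> tab k N j a' b' (0, b)" using h unfolding tab_def by auto
      then show False using e by simp
    next
      case 2 then have "tab k N j a b (0, b') \<noteq> tab k N j a' b' (0, b')" using h unfolding tab_def by auto
      then show False using e by simp
    qed
  qed
  ultimately show "a = a' \<and> b = b'" by simp
qed

lemma tab_prod:
  fixes w :: "nat \<Rightarrow> 'a::comm_ring_1"
  assumes "j \<le> N" "k \<le> N" "a \<le> j" "k \<le> b" "b \<le> N"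
  shows "(\<Prod>p\<in>({0} \<times> {k..<N}) \<union> ({1} \<times> {..<j}). w (tab k N j a b p))
     = w 1 ^ (b - k) * w 2 ^ (N - b) * (w 1 ^ a * w 2 ^ (j - a))"
proof -
  have disj: "({0::nat} \<times> {k..<N}) \<inter> ({1} \<times> {..<j}) = {}" by auto
  have "(\<Prod>p\<in>({0} \<times> {k..<N}) \<union> ({1} \<times> {..<j}). w (tab k N j a b p))
     = (\<Prod>p\<in>{0} \<times> {k..<N}. w (tab k N j a b p)) * (\<Prod>p\<in>{1} \<times> {..<j}. w (tab k N j a b p))"
    by (rule prod.union_disjoint) (auto)
  also have "(\<Prod>p\<in>{0} \<times> {k..<N}. w (tab k N j a b p)) = (\<Prod>c\<in>{k..<N}. w (if c < b then 1 else 2))"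
  proof -
    have "(\<Prod>p\<in>{0} \<times> {k..<N}. w (tab k N j a b p)) = (\<Prod>c\<in>{k..<N}. w (tab k N j a b (0,c)))"
    proof -
      have "{0::nat} \<times> {k..<N} = (\<lambda>c. (0,c)) ` {k..<N}" by auto
      moreover have "inj_on (\<lambda>c::nat. (0::nat,c)) {k..<N}" by (auto simp: inj_on_def)
      ultimately show ?thesis by (simp add: prod.reindex)
    qed
    also have "\<dots> = (\<Prod>c\<in>{k..<N}. w (if c < b then 1 else 2))"
      by (rule prod.cong) (auto simp: tab_def)
    finally show ?thesis .
  qed
  also have "\<dots> = w 1 ^ (b - k) * w 2 ^ (N - b)"
  proof -
    have "{k..<N} = {k..<b} \<union> {b..<N}" using assms by auto
    then have "(\<Prod>c\<in>{k..<N}. w (if c < b then 1 else 2)) = (\<Prod>c\<in>{k..<b}. w (if c < b then 1 else 2)) * (\<Prod>c\<in>{b..<N}. w (if c < b then 1 else 2))"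
      by (simp add: prod.union_disjoint)
    also have "(\<Prod>c\<in>{k..<b}. w (if c < b then 1 else 2)) = (\<Prod>c\<in>{k..<b}. w 1)" by (rule prod.cong) auto
    also have "(\<Prod>c\<in>{b..<N}. w (if c < b then 1 else 2)) = (\<Prod>c\<in>{b..<N}. w 2)" by (rule prod.cong) auto
    finally show ?thesis by simp
  qed
  also have "(\<Prod>p\<in>{1} \<times> {..<j}. w (tab k N j a b p)) = (\<Prod>c\<in>{0..<j}. w (if c < a then 1 else 2))"
  proof -
    have "(\<Prod>p\<in>{1} \<times> {..<j}. w (tab k N j a b p)) = (\<Prod>c\<in>{..<j}. w (tab k N j a b (1,c)))"
    proof -
      have "{1::nat} \<times> {..<j} = (\<lambda>c. (1,c)) ` {..<j}" by auto
      moreover have "inj_on (\<lambda>c::nat. (1::nat,c)) {..<j}" by (auto simp: inj_on_def)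
      ultimately show ?thesis by (simp add: prod.reindex)
    qed
    also have "\<dots> = (\<Prod>c\<in>{0..<j}. w (if c < a then 1 else 2))"
      by (rule prod.cong) (auto simp: tab_def)
    finally show ?thesis .
  qed
  also have "\<dots> = w 1 ^ a * w 2 ^ (j - a)"
  proof -
    have "{0..<j} = {0..<a} \<union> {a..<j}" using assms by auto
    then have "(\<Prod>c\<in>{0..<j}. w (if c < a then 1 else 2)) = (\<Prod>c\<in>{0..<a}. w (if c < a then 1 else 2)) * (\<Prod>c\<in>{a..<j}. w (if c < a then 1 else 2))"
      by (simp add: prod.union_disjoint)
    also have "(\<Prod>c\<in>{0..<a}. w (if c < a then 1 else 2)) = (\<Prod>c\<in>{0..<a}. w 1)" by (rule prod.cong) auto
    also have "(\<Prod>c\<in>{a..<j}. w (if c < a then 1 else 2)) = (\<Prod>c\<in>{a..<j}. w 2)" by (rule prod.cong) auto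
    finally show ?thesis by simp
  qed
  finally show ?thesis .
qed



lemma term_eq:
  fixes x y :: complex
  assumes "x \<noteq> 0" "y \<noteq> 0" "a \<le> j" "k \<le> b" "b \<le> N"
  shows "x ^ (b - k) * inverse y ^ (N - b) * (x ^ a * inverse y ^ (j - a))
      = 1 / (x ^ k * y ^ (N + j)) * ((x*y)^a * (x*y)^b)"
proof -
  have e1: "x ^ b = x ^ (b - k) * x ^ k" using assms by (simp add: power_add[symmetric])
  have e2: "y ^ (N + j) = y ^ (N - b) * y ^ (j - a) * y ^ a * y ^ b"
    using assms by (simp add: power_add[symmetric])
  show ?thesis using assms
    by (simp add: e1 e2 power_mult_distrib field_simps power_inverse)
qed

lemma schur_part:
  fixes x y :: complex and N j k :: nat
  assumes "x \<noteq> 0" "y \<noteq> 0" "j \<le> N" "k \<le> N"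
  shows "skew_schur 2 (\<lambda>i. if i = 1 then x else inverse y) [N, j] [k]
     = 1 / (x ^ k * y ^ (N + j)) * (\<Sum>r=0..min j k. (x * y) ^ r) * (\<Sum>r=max j k..N. (x * y) ^ r)"
proof -
  define w where "w = (\<lambda>i::nat. if i = 1 then x else inverse y)"
  let ?A = "{0..min j k} \<times> {max j k..N}"
  have "skew_schur 2 w [N, j] [k] = (\<Sum>T\<in>ssyt 2 (({0} \<times> {k..<N}) \<union> ({1} \<times> {..<j})).
           \<Prod>p\<in>({0} \<times> {k..<N}) \<union> ({1} \<times> {..<j}). w (T p))"
    unfolding skew_schur_def using diag_sub[OF assms(4)] skew_D[OF assms(3,4)] by simp
  also have "\<dots> = (\<Sum>(a,b)\<in>?A. \<Prod>p\<in>({0} \<times> {k..<N}) \<union> ({1} \<times> {..<j}). w (tab k N j a b p))"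
    unfolding ssyt_char[OF assms(3,4)]
    by (subst sum.reindex[OF tab_inj[OF assms(3,4)]]) (simp add: case_prod_unfold)
  also have "\<dots> = (\<Sum>(a,b)\<in>?A. 1 / (x ^ k * y ^ (N + j)) * ((x*y)^a * (x*y)^b))"
  proof (rule sum.cong[OF refl])
    fix p assume h: "p \<in> ?A"
    obtain a b where p: "p = (a, b)" by fastforce
    from h p have "a \<le> j" "k \<le> b" "b \<le> N" by auto
    then show "(case p of (a, b) \<Rightarrow> \<Prod>p\<in>({0} \<times> {k..<N}) \<union> ({1} \<times> {..<j}). w (tab k N j a b p))
        = (case p of (a, b) \<Rightarrow> 1 / (x ^ k * y ^ (N + j)) * ((x*y)^a * (x*y)^b))"
      unfolding p using tab_prod[OF assms(3,4), of a b w] term_eq[OF assms(1,2)] by (simp add: w_def)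
  qed
  also have "\<dots> = 1 / (x ^ k * y ^ (N + j)) * ((\<Sum>r=0..min j k. (x * y) ^ r) * (\<Sum>r=max j k..N. (x * y) ^ r))"
  proof -
    let ?C = "1 / (x ^ k * y ^ (N + j))"
    have "(\<Sum>(a,b)\<in>?A. ?C * ((x*y)^a * (x*y)^b)) = ?C * (\<Sum>(a,b)\<in>?A. (x*y)^a * (x*y)^b)"
      by (simp add: sum_distrib_left case_prod_unfold)
    also have "(\<Sum>(a,b)\<in>?A. (x*y)^a * (x*y)^b) = (\<Sum>a\<in>{0..min j k}. \<Sum>b\<in>{max j k..N}. (x*y)^a * (x*y)^b)"
      by (rule sum.cartesian_product[symmetric])
    also have "\<dots> = (\<Sum>r=0..min j k. (x * y) ^ r) * (\<Sum>r=max j k..N. (x * y) ^ r)"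
      by (rule sum_product[symmetric])
    finally show ?thesis .
  qed
  finally show ?thesis unfolding w_def by (simp add: mult.assoc)
qed


theorem mainTheorem4:
  fixes x y s :: complex and N j k :: nat
  assumes "x \<noteq> 0" "y \<noteq> 0" "N \<ge> 1" "j \<le> N" "k \<le> N"
    and "s ^ 2 = x * y"
  defines "m \<equiv> min j k" and "M \<equiv> max j k" and "c \<equiv> (1 + x * y) / (2 * s)"
  shows "skew_schur 2 (\<lambda>i. if i = 1 then x else inverse y) [N, j] [k]
           = (s / y) ^ (N + j - k) * chebU m c * chebU (N - M) c
         \<and> (s / y) ^ (N + j - k) * chebU m c * chebU (N - M) c
           = 1 / (x ^ k * y ^ (N + j)) * (\<Sum>r=0..m. (x * y) ^ r) * (\<Sum>r=M..N. (x * y) ^ r)"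
proof -
  have A: "(s / y) ^ (N + j - k) * chebU m c * chebU (N - M) c
           = 1 / (x ^ k * y ^ (N + j)) * (\<Sum>r=0..m. (x * y) ^ r) * (\<Sum>r=M..N. (x * y) ^ r)"
    unfolding m_def M_def c_def by (rule alg_part[OF assms(1,2,4,5,6)])
  have B: "skew_schur 2 (\<lambda>i. if i = 1 then x else inverse y) [N, j] [k]
     = 1 / (x ^ k * y ^ (N + j)) * (\<Sum>r=0..m. (x * y) ^ r) * (\<Sum>r=M..N. (x * y) ^ r)"
    unfolding m_def M_def by (rule schur_part[OF assms(1,2,4,5)])
  show ?thesis using A B by simp
qed

end
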